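(* Let $\{v_k(t)\}_{k\ge 0}$ be a monic polynomial sequence ($\deg v_k=k$) of complex polynomials. Let $(g_k)_{k\ge0}$ be complex numbers with $g_0=0$ and $g_k\neq 0$ for $k\ge 1$, and let $(h_k)_{k\ge 0}$ be complex numbers with $h_k\neq h_j$ whenever $k\neq j$. Let $\gamma$ and $\phi$ be the linear operators on the space of complex polynomials defined by $\gamma v_k=g_k v_{k-1}$ for $k\ge1$, $\gamma v_0=0$, and $\phi v_k=h_k v_k$ for $k\ge 0$. Then the monic polynomial sequence $\{u_n(t)\}_{n\ge 0}$ ($\deg u_n=n$) satisfying $$\gamma u_n(t)+\phi u_n(t)=h_n u_n(t),\qquad n\ge 0,$$ is given by $u_n(t)=\sum_{k=0}^n c_{n,k}v_k(t)$, where $c_{n,n}=1$ for $n\ge0$ and $$c_{n,k}=\prod_{j=k}^{n-1}\frac{g_{j+1}}{h_n-h_j},\qquad 0\le k\le n-1.$$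
   Context: A polynomial sequence is a sequence of polynomials $p_0,p_1,\dots$ with $\deg p_n=n$; it is monic if each $p_n$ is monic. Every polynomial sequence is a basis of the space of polynomials. *)

theory Defs
  imports "HOL-Computational_Algebra.Polynomial"
begin

definition monic_poly_seq :: "(nat \<Rightarrow> 'a::comm_ring_1 poly) \<Rightarrow> bool" where
  "monic_poly_seq p \<longleftrightarrow> (\<forall>n. degree (p n) = n \<and> lead_coeff (p n) = 1)"

definition poly_linear_op :: "(complex poly \<Rightarrow> complex poly) \<Rightarrow> bool" where
  "poly_linear_op T \<longleftrightarrow> (\<forall>p q. T (p + q) = T p + T q) \<and> (\<forall>a p. T (smult a p) = smult a (T p))"

definition conn_coeff :: "(nat \<Rightarrow> complex) \<Rightarrow> (nat \<Rightarrow> complex) \<Rightarrow> nat \<Rightarrow> nat \<Rightarrow> complex" where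
  "conn_coeff g h n k = (if k = n then 1 else (\<Prod>j\<in>{k..<n}. g (j + 1) / (h n - h j)))"

end

theory Submission
  imports Defs
begin

lemma lin_sum:
  assumes "poly_linear_op T"
  shows "T (\<Sum>k\<in>A. f k) = (\<Sum>k\<in>A. T (f k))"
proof (induction A rule: infinite_finite_induct)
  case (infinite A)
  have "T 0 = T 0 + T 0" using assms unfolding poly_linear_op_def
    by (metis add_0)
  then show ?case using infinite by simp
next
  case empty
  have "T 0 = T 0 + T 0" using assms unfolding poly_linear_op_def
    by (metis add_0)
  then show ?case by simp
next
  case (insert x F)
  then show ?case using assms unfolding poly_linear_op_def by simp
qed

lemma smult_sum_r: "smult c (\<Sum>k\<in>A. f k) = (\<Sum>k\<in>A. smult c (f k))"
  by (induct A rule: infinite_finite_induct) (auto simp: smult_add_right)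

lemma lin_smult: "poly_linear_op T \<Longrightarrow> T (smult a p) = smult a (T p)"
  unfolding poly_linear_op_def by blast

lemma deg_sum:
  assumes "monic_poly_seq v"
  shows "degree (\<Sum>k\<le>n. smult (a k) (v k)) \<le> n"
  apply (rule degree_sum_le)
  using assms unfolding monic_poly_seq_def
  by (auto intro: order.trans[OF degree_smult_le])

lemma coeff_top:
  assumes "monic_poly_seq v"
  shows "coeff (\<Sum>k\<le>n. smult (a k) (v k)) n = a n"
proof (cases n)
  case 0
  have "coeff (v 0) 0 = 1" using assms unfolding monic_poly_seq_def by metis
  then show ?thesis using 0 by simp
next
  case (Suc m)
  have "coeff (\<Sum>k\<le>m. smult (a k) (v k)) n = 0"
    using deg_sum[OF assms, where n=m and a=a] Suc by (simp add: coeff_eq_0)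
  moreover have "coeff (v n) n = 1" using assms unfolding monic_poly_seq_def by metis
  ultimately show ?thesis using Suc by (simp add: coeff_sum)
qed

lemma unique:
  assumes "monic_poly_seq v"
  shows "(\<Sum>k\<le>n. smult (a k) (v k)) = 0 \<Longrightarrow> k \<le> n \<Longrightarrow> a k = 0"
proof (induction n arbitrary: k)
  case 0
  then show ?case using coeff_top[OF assms, of a 0] by simp
next
  case (Suc n)
  have an: "a (Suc n) = 0" using coeff_top[OF assms, of a "Suc n"] Suc.prems(1) by (metis coeff_0)
  then have "(\<Sum>k\<le>n. smult (a k) (v k)) = 0" using Suc.prems by simp
  then show ?case using Suc an by (cases "k = Suc n") auto
qed

lemma expand:
  assumes "monic_poly_seq v"
  shows "degree p \<le> n \<Longrightarrow> \<exists>a. p = (\<Sum>k\<le>n. smult (a k) (v k))"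
proof (induction n arbitrary: p)
  case 0
  have "degree (v 0) = 0" "coeff (v 0) 0 = 1" using assms unfolding monic_poly_seq_def by metis+
  then have v0: "v 0 = 1" using degree_0_id[of "v 0"] pCons_one by metis
  have p0: "[:coeff p 0:] = p" using 0 degree_0_id[of p] le_0_eq by metis
  have "p = smult (coeff p 0) (v 0)" using v0 p0 by (metis smult_one)
  then have "p = (\<Sum>k\<le>0. smult ((\<lambda>_. coeff p 0) k) (v k))" by (simp only: atMost_0 sum.insert sum.empty) simp
  then show ?case by (rule exI[where x="\<lambda>_. coeff p 0"])
next
  case (Suc n)
  define q where "q = p - smult (coeff p (Suc n)) (v (Suc n))"
  have dv: "degree (v (Suc n)) = Suc n" "coeff (v (Suc n)) (Suc n) = 1"
    using assms unfolding monic_poly_seq_def by metis+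
  have "degree q \<le> Suc n" unfolding q_def
    by (intro degree_diff_le Suc.prems order.trans[OF degree_smult_le]) (simp add: dv)
  moreover have "coeff q (Suc n) = 0" unfolding q_def using dv by simp
  moreover have "degree q \<noteq> Suc n"
  proof
    assume "degree q = Suc n"
    then have "lead_coeff q = 0" using \<open>coeff q (Suc n) = 0\<close> by simp
    then have "q = 0" by simp
    then show False using \<open>degree q = Suc n\<close> by simp
  qed
  ultimately have "degree q \<le> n" by linarith
  then obtain a where a: "q = (\<Sum>k\<le>n. smult (a k) (v k))" using Suc.IH by blast
  define b where "b = a(Suc n := coeff p (Suc n))"
  have "(\<Sum>k\<le>n. smult (b k) (v k)) = (\<Sum>k\<le>n. smult (a k) (v k))"
    unfolding b_def by (intro sum.cong) auto
  then have "p = (\<Sum>k\<le>Suc n. smult (b k) (v k))" using a unfolding q_def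
    by (simp add: b_def algebra_simps)
  then show ?case by blast
qed

theorem theorem1:
  fixes v :: "nat \<Rightarrow> complex poly"
    and g h :: "nat \<Rightarrow> complex"
    and \<gamma> \<phi> :: "complex poly \<Rightarrow> complex poly"
  assumes v_monic: "monic_poly_seq v"
    and g0: "g 0 = 0"
    and g_nz: "\<And>k. k \<ge> 1 \<Longrightarrow> g k \<noteq> 0"
    and h_inj: "\<And>k j. k \<noteq> j \<Longrightarrow> h k \<noteq> h j"
    and \<gamma>_lin: "poly_linear_op \<gamma>"
    and \<phi>_lin: "poly_linear_op \<phi>"
    and \<gamma>_v: "\<And>k. k \<ge> 1 \<Longrightarrow> \<gamma> (v k) = smult (g k) (v (k - 1))"
    and \<gamma>_v0: "\<gamma> (v 0) = 0"
    and \<phi>_v: "\<And>k. \<phi> (v k) = smult (h k) (v k)"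
  shows "\<forall>n (u :: complex poly).
           (degree u = n \<and> lead_coeff u = 1 \<and> \<gamma> u + \<phi> u = smult (h n) u)
           \<longleftrightarrow> u = (\<Sum>k\<le>n. smult (conn_coeff g h n k) (v k))"
proof (intro allI)
  fix n and u :: "complex poly"
  define S where "S a = (\<Sum>k\<le>n. smult (a k) (v k))" for a
  define B where "B a k = a k * (h k - h n) + (if k < n then a (Suc k) * g (Suc k) else 0)" for a k
  have gam: "\<gamma> (S a) = (\<Sum>k\<le>n. smult (if k < n then a (Suc k) * g (Suc k) else 0) (v k))" for a
  proof -
    have "\<gamma> (S a) = (\<Sum>k\<le>n. smult (a k * g k) (v (k - 1)))"
      unfolding S_def lin_sum[OF \<gamma>_lin]
      apply (intro sum.cong refl)
      subgoal for k using \<gamma>_v[of k] \<gamma>_v0 g0 by (cases k) (auto simp: lin_smult[OF \<gamma>_lin])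
      done
    also have "\<dots> = (\<Sum>k\<le>n. smult (if k < n then a (Suc k) * g (Suc k) else 0) (v k))"
    proof (cases n)
      case 0 then show ?thesis using g0 by simp
    next
      case (Suc m)
      have "(\<Sum>k\<le>n. smult (a k * g k) (v (k - 1))) = (\<Sum>k\<le>m. smult (a (Suc k) * g (Suc k)) (v k))"
        unfolding Suc sum.atMost_Suc_shift using g0 by simp
      also have "\<dots> = (\<Sum>k\<le>n. smult (if k < n then a (Suc k) * g (Suc k) else 0) (v k))"
        unfolding Suc sum.atMost_Suc by (simp add: less_Suc_eq_le)
      finally show ?thesis .
    qed
    finally show ?thesis .
  qed
  have phi: "\<phi> (S a) = (\<Sum>k\<le>n. smult (a k * h k) (v k))" for a
    unfolding S_def lin_sum[OF \<phi>_lin] by (simp add: lin_smult[OF \<phi>_lin] \<phi>_v)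
  have key: "\<gamma> (S a) + \<phi> (S a) - smult (h n) (S a) = S (B a)" for a
    unfolding gam phi
    unfolding S_def B_def smult_sum_r sum.distrib[symmetric] sum_subtractf[symmetric]
    by (intro sum.cong refl) (simp add: smult_add_left smult_diff_left algebra_simps)
  define c where "c = conn_coeff g h n"
  have crec: "c k = g (Suc k) / (h n - h k) * c (Suc k)" if "k < n" for k
  proof (cases "Suc k = n")
    case True
    then show ?thesis using that unfolding c_def conn_coeff_def by auto
  next
    case False
    then show ?thesis using that unfolding c_def conn_coeff_def
      by (simp add: prod.atLeast_Suc_lessThan)
  qed
  have Bc: "B c k = 0" if kle: "k \<le> n" for k
  proof (cases "k < n")
    case True
    have "h n - h k \<noteq> 0" using h_inj[of n k] True by auto
    then show ?thesis unfolding B_def using True crec[OF True] by (simp add: field_simps)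
  next
    case False
    then show ?thesis unfolding B_def using kle
      by (cases "k = n") (auto simp: c_def conn_coeff_def)
  qed
  have cn: "c n = 1" unfolding c_def conn_coeff_def by simp
  show "(degree u = n \<and> lead_coeff u = 1 \<and> \<gamma> u + \<phi> u = smult (h n) u)
           \<longleftrightarrow> u = (\<Sum>k\<le>n. smult (conn_coeff g h n k) (v k))"
  proof
    assume A: "degree u = n \<and> lead_coeff u = 1 \<and> \<gamma> u + \<phi> u = smult (h n) u"
    then obtain a where a: "u = S a" using expand[OF v_monic, of u n] unfolding S_def by auto
    have an: "a n = 1" using A a coeff_top[OF v_monic, of a n] unfolding S_def by metis
    have "S (B a) = 0" using key[of a] A a by simp
    then have Ba: "B a k = 0" if "k \<le> n" for k using unique[OF v_monic] that unfolding S_def by blast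
    have "\<forall>k. k \<le> n \<longrightarrow> n - k = d \<longrightarrow> a k = c k" for d
    proof (induction d)
      case 0 then show ?case using an cn by auto
    next
      case (Suc d)
      show ?case
      proof (intro allI impI)
        fix k assume k: "k \<le> n" "n - k = Suc d"
        then have kn: "k < n" by auto
        have IH: "a (Suc k) = c (Suc k)" using Suc.IH k by auto
        have "h n - h k \<noteq> 0" using h_inj[of n k] kn by auto
        moreover have "B a k = 0" using Ba k by auto
        ultimately show "a k = c k" unfolding crec[OF kn] using kn IH unfolding B_def
          by (simp add: field_simps)
      qed
    qed
    then have "a k = c k" if "k \<le> n" for k using that by blast
    then show "u = (\<Sum>k\<le>n. smult (conn_coeff g h n k) (v k))"
      unfolding a S_def c_def by (intro sum.cong) auto
  next
    assume u: "u = (\<Sum>k\<le>n. smult (conn_coeff g h n k) (v k))"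
    then have uS: "u = S c" unfolding S_def c_def by simp
    have lc: "coeff u n = 1" using coeff_top[OF v_monic, of c n] uS cn unfolding S_def by simp
    have "degree u \<le> n" using deg_sum[OF v_monic, where n=n and a=c] uS unfolding S_def by simp
    moreover have "degree u \<ge> n" using lc by (metis le_degree zero_neq_one)
    ultimately have dn: "degree u = n" by simp
    have "S (B c) = 0" unfolding S_def by (rule sum.neutral) (simp add: Bc)
    then have "\<gamma> u + \<phi> u = smult (h n) u" using key[of c] uS by simp
    then show "degree u = n \<and> lead_coeff u = 1 \<and> \<gamma> u + \<phi> u = smult (h n) u"
      using dn lc by simp
  qed
qed

end
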